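(* Let $f_0\in\mathbb{C}[z]$ be a polynomial of length $\ell$ with nonzero constant coefficient, let $t$ be an element of the group $G_\ell=\langle n,h,r\rangle$ of permutations of $P_\ell$, and let $a_0=t(f_0)$. Let $f_0,f_1,\ldots$ and $a_0,a_1,\ldots$ be sequences of Rudin–Shapiro-like polynomials generated from $f_0$ and $a_0$, i.e., $f_{m+1}(z)=f_m(z)+\sigma_m z^{\operatorname{len} f_m}f_m^\dagger(-z)$ and $a_{m+1}(z)=a_m(z)+\sigma'_m z^{\operatorname{len} a_m}a_m^\dagger(-z)$ for some sign sequences $(\sigma_m),(\sigma'_m)$ in $\{-1,1\}$. Then $\lim_{m\to\infty}\mathrm{ADF}(a_m)=\lim_{m\to\infty}\mathrm{ADF}(f_m)$.
   Context: For a polynomial $a(z)=a_0+\cdots+a_dz^d$ of degree $d$, $\operatorname{len}a=1+d$ and $a^\dagger(z)=\overline{a_d}+\overline{a_{d-1}}z+\cdots+\overline{a_0}z^d$; $a^\dagger(-z)$ means $a^\dagger$ evaluated at $-z$; $\widetilde{a}(z)=a(-z)$. $P_\ell$ is the set of polynomials of length $\ell$ in $\mathbb{C}[z]$ with nonzero constant coefficient, and $G_\ell$ is the group of permutations of $P_\ell$ generated by $n(f)=-f$, $h(f)=\widetilde{f}$, $r(f)=f^\dagger$. Polynomials are identified with their coefficient sequences; for a sequence $f$, with $C_{f,f}(s)=\sum_jf_{j+s}\overline{f_j}$, the autocorrelation demerit factor is $\mathrm{ADF}(f)=\sum_{s\ne0}|C_{f,f}(s)|^2/|C_{f,f}(0)|^2$,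 which equals $\|f\|_4^4/\|f\|_2^4-1$ with $\|f\|_p=\left(\frac{1}{2\pi}\int_0^{2\pi}|f(e^{i\theta})|^pd\theta\right)^{1/p}$. *)

theory Defs
  imports "HOL-Computational_Algebra.Polynomial" Complex_Main
begin

definition plen :: "complex poly \<Rightarrow> nat" where
  "plen a = degree a + 1"

definition Pset :: "nat \<Rightarrow> complex poly set" where
  "Pset l = {f. plen f = l \<and> coeff f 0 \<noteq> 0}"

definition dagger :: "complex poly \<Rightarrow> complex poly" where
  "dagger a = map_poly cnj (reflect_poly a)"

definition negvar :: "complex poly \<Rightarrow> complex poly" where
  "negvar a = pcompose a [:0, -1:]"

definition gen_n :: "complex poly \<Rightarrow> complex poly" where "gen_n f = - f"
definition gen_h :: "complex poly \<Rightarrow> complex poly" where "gen_h f = negvar f"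
definition gen_r :: "complex poly \<Rightarrow> complex poly" where "gen_r f = dagger f"

text \<open>The group generated by n, h, r (each is an involution on P_l, so the
  monoid generated under composition is the group).\<close>
inductive_set Ggroup :: "(complex poly \<Rightarrow> complex poly) set" where
  G_id: "id \<in> Ggroup"
| G_n: "t \<in> Ggroup \<Longrightarrow> gen_n \<circ> t \<in> Ggroup"
| G_h: "t \<in> Ggroup \<Longrightarrow> gen_h \<circ> t \<in> Ggroup"
| G_r: "t \<in> Ggroup \<Longrightarrow> gen_r \<circ> t \<in> Ggroup"

definition rs_step :: "complex \<Rightarrow> complex poly \<Rightarrow> complex poly" where
  "rs_step \<sigma> f = f + smult \<sigma> (monom 1 (plen f) * negvar (dagger f))"

definition is_RS_like_seq :: "(nat \<Rightarrow> complex poly) \<Rightarrow> bool" where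
  "is_RS_like_seq F \<longleftrightarrow> (\<exists>\<sigma> :: nat \<Rightarrow> complex. (\<forall>m. \<sigma> m \<in> {-1, 1}) \<and>
      (\<forall>m. F (Suc m) = rs_step (\<sigma> m) (F m)))"

definition icoeff :: "complex poly \<Rightarrow> int \<Rightarrow> complex" where
  "icoeff f k = (if k < 0 then 0 else coeff f (nat k))"

definition acorr :: "complex poly \<Rightarrow> int \<Rightarrow> complex" where
  "acorr f s = (\<Sum>j\<in>{0..<int (plen f)}. icoeff f (j + s) * cnj (icoeff f j))"

text \<open>Autocorrelation demerit factor (the sum over s \<noteq> 0 is finite since
  C(s) = 0 for |s| \<ge> len f).\<close>
definition ADF :: "complex poly \<Rightarrow> real" where
  "ADF f = (\<Sum>s\<in>{-(int (plen f) - 1)..int (plen f) - 1} - {0}. (cmod (acorr f s))\<^sup>2)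
             / (cmod (acorr f 0))\<^sup>2"

end

theory Submission
  imports Defs "HOL-Analysis.Analysis"
begin


definition Mhas :: "(complex \<Rightarrow> complex) \<Rightarrow> complex \<Rightarrow> bool" where
  "Mhas \<phi> v \<longleftrightarrow> ((\<lambda>\<theta>. \<phi> (cis \<theta>)) has_integral (of_real (2*pi) * v)) {0..2*pi}"

definition Mv :: "(complex \<Rightarrow> complex) \<Rightarrow> complex" where
  "Mv \<phi> = integral {0..2*pi} (\<lambda>\<theta>. \<phi> (cis \<theta>)) / of_real (2*pi)"

lemma Mhas_add: "Mhas \<phi> a \<Longrightarrow> Mhas \<psi> b \<Longrightarrow> Mhas (\<lambda>z. \<phi> z + \<psi> z) (a + b)"
  unfolding Mhas_def distrib_left by (rule has_integral_add)

lemma Mhas_diff: "Mhas \<phi> a \<Longrightarrow> Mhas \<psi> b \<Longrightarrow> Mhas (\<lambda>z. \<phi> z - \<psi> z) (a - b)"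
  unfolding Mhas_def right_diff_distrib by (rule has_integral_diff)

lemma Mhas_cmult: "Mhas \<phi> a \<Longrightarrow> Mhas (\<lambda>z. c * \<phi> z) (c * a)"
proof -
  assume "Mhas \<phi> a"
  then have "((\<lambda>\<theta>. c * \<phi> (cis \<theta>)) has_integral (c * (of_real (2*pi) * a))) {0..2*pi}"
    unfolding Mhas_def by (rule has_integral_mult_right)
  moreover have "c * (of_real (2*pi) * a) = of_real (2*pi) * (c * a)" by (simp only: mult_ac)
  ultimately show ?thesis unfolding Mhas_def by (simp only:)
qed

lemma Mhas_neg: "Mhas \<phi> a \<Longrightarrow> Mhas (\<lambda>z. - \<phi> z) (- a)"
  unfolding Mhas_def mult_minus_right by (rule has_integral_neg)

lemma Mhas_cnj: "Mhas \<phi> a \<Longrightarrow> Mhas (\<lambda>z. cnj (\<phi> z)) (cnj a)"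
proof -
  assume "Mhas \<phi> a"
  then have "(cnj \<circ> (\<lambda>\<theta>. \<phi> (cis \<theta>)) has_integral cnj (of_real (2*pi) * a)) {0..2*pi}"
    unfolding Mhas_def has_integral_cnj .
  moreover have "cnj (of_real (2*pi) * a) = of_real (2*pi) * cnj a" by simp
  ultimately show ?thesis unfolding Mhas_def o_def by (simp only:)
qed

lemma Mhas_cong: "Mhas \<phi> a \<Longrightarrow> (\<And>z. cmod z = 1 \<Longrightarrow> \<phi> z = \<psi> z) \<Longrightarrow> Mhas \<psi> a"
  unfolding Mhas_def by (rule has_integral_eq[of _ "\<lambda>\<theta>. \<phi> (cis \<theta>)"]) auto

lemma Mhas_unique: "Mhas \<phi> a \<Longrightarrow> Mhas \<phi> b \<Longrightarrow> a = b"
proof -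
  assume "Mhas \<phi> a" "Mhas \<phi> b"
  then have "of_real (2*pi) * a = of_real (2*pi) * b" unfolding Mhas_def by (rule has_integral_unique)
  then show "a = b" by simp
qed

lemma Mhas_Mv: "Mhas \<phi> a \<Longrightarrow> Mv \<phi> = a"
  unfolding Mhas_def Mv_def by (drule integral_unique) simp

lemma Mhas_cont: "continuous_on UNIV \<phi> \<Longrightarrow> Mhas \<phi> (Mv \<phi>)"
proof -
  assume c: "continuous_on UNIV \<phi>"
  have "continuous_on {0..2*pi} (\<lambda>\<theta>. \<phi> (cis \<theta>))"
    by (rule continuous_on_compose2[OF c]) (auto intro!: continuous_intros)
  then have "(\<lambda>\<theta>. \<phi> (cis \<theta>)) integrable_on {0..2*pi}" by (rule integrable_continuous_interval)
  then have "((\<lambda>\<theta>. \<phi> (cis \<theta>)) has_integral integral {0..2*pi} (\<lambda>\<theta>. \<phi> (cis \<theta>))) {0..2*pi}"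
    by (rule integrable_integral)
  moreover have "integral {0..2*pi} (\<lambda>\<theta>. \<phi> (cis \<theta>)) = of_real (2*pi) * Mv \<phi>"
    unfolding Mv_def by simp
  ultimately show ?thesis unfolding Mhas_def by simp
qed

lemma Mhas_sum: "finite I \<Longrightarrow> (\<And>i. i \<in> I \<Longrightarrow> Mhas (\<phi> i) (v i)) \<Longrightarrow> Mhas (\<lambda>z. \<Sum>i\<in>I. \<phi> i z) (\<Sum>i\<in>I. v i)"
proof -
  assume "finite I" "\<And>i. i \<in> I \<Longrightarrow> Mhas (\<phi> i) (v i)"
  then have "((\<lambda>\<theta>. \<Sum>i\<in>I. \<phi> i (cis \<theta>)) has_integral (\<Sum>i\<in>I. of_real (2*pi) * v i)) {0..2*pi}"
    unfolding Mhas_def by (intro has_integral_sum)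
  then show ?thesis unfolding Mhas_def sum_distrib_left .
qed

lemma int_cis: "((\<lambda>\<theta>. cis (of_int k * \<theta>)) has_integral (if k = 0 then of_real (2*pi) else 0)) {0..2*pi}"
proof (cases "k = 0")
  case True
  then show ?thesis using has_integral_const_real[of "1::complex" 0 "2*pi"] by (simp add: scaleR_conv_of_real)
next
  case False
  define F where "F = (\<lambda>\<theta>::real. exp (\<i> * of_int k * of_real \<theta>) / (\<i> * of_int k))"
  have "((\<lambda>\<theta>. cis (of_int k * \<theta>)) has_integral (F (2*pi) - F 0)) {0..2*pi}"
  proof (rule fundamental_theorem_of_calculus)
    fix x assume "x \<in> {0..2*pi}"
    have d: "((\<lambda>z. exp (\<i> * of_int k * z) / (\<i> * of_int k)) has_field_derivative (exp (\<i> * of_int k * of_real x) * (\<i> * of_int k * 1) / (\<i> * of_int k))) (at (of_real x))"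
      by (intro DERIV_cdivide DERIV_fun_exp DERIV_cmult DERIV_ident)
    have "exp (\<i> * of_int k * of_real x) * (\<i> * of_int k * 1) / (\<i> * of_int k) = exp (\<i> * of_int k * of_real x)"
      using False by simp
    with d have "((\<lambda>z. exp (\<i> * of_int k * z) / (\<i> * of_int k)) has_field_derivative exp (\<i> * of_int k * of_real x)) (at (of_real x))"
      by simp
    then have "(F has_vector_derivative exp (\<i> * of_int k * of_real x)) (at x within {0..2 * pi})"
      unfolding F_def by (rule has_vector_derivative_real_field)
    moreover have "exp (\<i> * of_int k * of_real x) = cis (of_int k * x)"
      by (simp add: cis_conv_exp mult_ac)
    ultimately show "(F has_vector_derivative cis (of_int k * x)) (at x within {0..2 * pi})" by simp
  qed simp
  moreover have "F (2*pi) - F 0 = 0"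
  proof -
    have "exp (\<i> * of_int k * of_real (2*pi)) = 1"
      using cis_multiple_2pi[of "of_int k"] by (simp add: cis_conv_exp mult_ac)
    then show ?thesis unfolding F_def by simp
  qed
  ultimately have "((\<lambda>\<theta>. cis (of_int k * \<theta>)) has_integral 0) {0..2*pi}" by (simp only:)
  then show ?thesis using False by (simp only: if_False)
qed

lemma Mhas_powi: "Mhas (\<lambda>z. z powi k) (if k = 0 then 1 else 0)"
  proof -
  have "(\<lambda>\<theta>. cis \<theta> powi k) = (\<lambda>\<theta>. cis (of_int k * \<theta>))" by (simp add: cis_power_int)
  then show ?thesis unfolding Mhas_def using int_cis[of k] by (cases "k = 0") auto
qed



lemma Mhas_negarg: "Mhas \<phi> a \<Longrightarrow> Mhas (\<lambda>z. \<phi> (- z)) a"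
proof -
  assume h: "Mhas \<phi> a"
  define \<psi> where "\<psi> = (\<lambda>\<theta>. \<phi> (cis \<theta>))"
  have per: "\<psi> (x + 2*pi) = \<psi> x" for x
    unfolding \<psi>_def by (simp add: cis.ctr complex_eq_iff)
  have sh: "\<phi> (- cis x) = \<psi> (x + pi)" for x
  proof -
    have "- cis x = cis (x + pi)" by (simp add: cis.ctr complex_eq_iff)
    then show ?thesis unfolding \<psi>_def by simp
  qed
  have I: "(\<psi> has_integral (of_real (2*pi) * a)) {0..2*pi}" using h unfolding Mhas_def \<psi>_def .
  then have int: "\<psi> integrable_on {0..2*pi}" by blast
  have i1: "\<psi> integrable_on {0..pi}" by (rule integrable_subinterval_real[OF int]) auto
  have i2: "\<psi> integrable_on {pi..2*pi}" by (rule integrable_subinterval_real[OF int]) auto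
  define I1 where "I1 = integral {0..pi} \<psi>"
  define I2 where "I2 = integral {pi..2*pi} \<psi>"
  have h1: "(\<psi> has_integral I1) {0..pi}" using i1 unfolding I1_def by (rule integrable_integral)
  have h2: "(\<psi> has_integral I2) {pi..2*pi}" using i2 unfolding I2_def by (rule integrable_integral)
  have "(\<psi> has_integral (I1 + I2)) {0..2*pi}" by (rule has_integral_combine[OF _ _ h1 h2]) auto
  then have sum: "I1 + I2 = of_real (2*pi) * a" using I by (rule has_integral_unique)
  have g1: "((\<lambda>x. \<psi> (x + pi)) has_integral I2) {0..pi}"
    using has_integral_shift_real_ivl[OF h2, of pi] by simp
  have g2': "((\<lambda>x. \<psi> (x + - pi)) has_integral I1) {pi..2*pi}"
    using has_integral_shift_real_ivl[OF h1, of "-pi"] by simp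
  have g2: "((\<lambda>x. \<psi> (x + pi)) has_integral I1) {pi..2*pi}"
  proof (rule has_integral_eq[OF _ g2'])
    fix x show "\<psi> (x + - pi) = \<psi> (x + pi)" using per[of "x - pi"] by (simp add: add.commute)
  qed
  have "((\<lambda>x. \<psi> (x + pi)) has_integral (I2 + I1)) {0..2*pi}"
    by (rule has_integral_combine[OF _ _ g1 g2]) auto
  then show ?thesis unfolding Mhas_def using sum sh by (simp add: add.commute)
qed



lemma cnj_unit: "cmod z = 1 \<Longrightarrow> cnj z = inverse z"
proof -
  assume "cmod z = 1"
  then have "z * cnj z = 1" using complex_norm_square[of z] by simp
  then show ?thesis by (metis inverse_unique)
qed

lemma unit_nz: "cmod z = 1 \<Longrightarrow> z \<noteq> 0" by auto

lemma poly_dagger: "cmod z = 1 \<Longrightarrow> poly (dagger f) z = z ^ degree f * cnj (poly f z)"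
proof -
  assume z: "cmod z = 1"
  then have "cnj z \<noteq> 0" by auto
  have "poly (dagger f) z = cnj (poly (reflect_poly f) (cnj z))" unfolding dagger_def by simp
  also have "\<dots> = cnj (cnj z ^ degree f * poly f (inverse (cnj z)))"
    using \<open>cnj z \<noteq> 0\<close> by (simp add: poly_reflect_poly_nz)
  also have "inverse (cnj z) = z" using cnj_unit[OF z] by simp
  finally have "poly (dagger f) z = cnj (cnj z ^ degree f * poly f z)" by simp
  then show ?thesis by simp
qed

lemma poly_negvar: "poly (negvar f) z = poly f (- z)"
  unfolding negvar_def by (simp add: poly_pcompose)

lemma degree_negvar: "degree (negvar f) = degree f"
  unfolding negvar_def by (simp add: degree_pcompose)

lemma poly_rs: assumes z: "cmod z = 1"
  shows "poly (rs_step \<sigma> f) z = poly f z + \<sigma> * (-1) ^ degree f * z ^ (2 * degree f + 1) * cnj (poly f (- z))"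
proof -
  have z': "cmod (- z) = 1" using z by simp
  have "poly (rs_step \<sigma> f) z = poly f z + \<sigma> * (z ^ (degree f + 1) * poly (dagger f) (- z))"
    by (simp only: rs_step_def plen_def poly_add poly_smult poly_mult poly_monom poly_negvar mult_1)
  also have "poly (dagger f) (- z) = (-1) ^ degree f * z ^ degree f * cnj (poly f (- z))"
    using poly_dagger[OF z'] by (simp only: power_minus[of z] mult.assoc)
  finally have eq: "poly (rs_step \<sigma> f) z = poly f z + \<sigma> * (z ^ (degree f + 1) * ((-1) ^ degree f * z ^ degree f * cnj (poly f (- z))))" .
  have zz: "z ^ (degree f + 1) * z ^ degree f = z ^ (2 * degree f + 1)"
    by (simp only: power_add[symmetric] mult_2 add_ac)
  have "\<sigma> * (z ^ (degree f + 1) * ((-1) ^ degree f * z ^ degree f * cnj (poly f (- z))))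
     = \<sigma> * (-1) ^ degree f * (z ^ (degree f + 1) * z ^ degree f) * cnj (poly f (- z))"
    by algebra
  then show ?thesis unfolding eq zz by simp
qed

definition uu :: "complex poly \<Rightarrow> complex \<Rightarrow> complex" where
  "uu f z = poly f z * cnj (poly f z)"

definition WW :: "complex poly \<Rightarrow> complex \<Rightarrow> complex" where
  "WW f z = (-1) ^ degree f * z ^ (2 * degree f + 1) * cnj (poly f z * poly f (- z))"

lemma alg1:
  fixes u v p \<sigma> e :: complex
  assumes p: "p * cnj p = 1" and s: "\<sigma> \<in> {-1, 1}" and e: "e \<in> {-1, 1}"
  shows "(u + \<sigma> * e * p * cnj v) * cnj (u + \<sigma> * e * p * cnj v)
     = u * cnj u + v * cnj v + \<sigma> * (e * p * cnj (u * v) + cnj (e * p * cnj (u * v)))"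
proof -
  have cs: "cnj \<sigma> = \<sigma>" and ss: "\<sigma> * \<sigma> = 1" using s by auto
  have ce: "cnj e = e" and ee: "e * e = 1" using e by auto
  show ?thesis using p ss ee
    unfolding complex_cnj_add complex_cnj_mult complex_cnj_cnj cs ce by algebra
qed

lemma uu_rs: assumes z: "cmod z = 1" and s: "\<sigma> \<in> {-1, 1}"
  shows "uu (rs_step \<sigma> f) z = uu f z + uu f (- z) + \<sigma> * (WW f z + cnj (WW f z))"
proof -
  have p: "z ^ (2 * degree f + 1) * cnj (z ^ (2 * degree f + 1)) = 1"
  proof -
    have n1: "cmod (z ^ (2 * degree f + 1)) = 1" unfolding norm_power z by simp
    show ?thesis using complex_norm_square[of "z ^ (2 * degree f + 1)", unfolded n1] by simp
  qed
  have e: "(-1::complex) ^ degree f \<in> {-1, 1}" by (cases "even (degree f)") auto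
  show ?thesis unfolding uu_def WW_def poly_rs[OF z]
    using alg1[OF p s e, of "poly f z" "poly f (- z)"] by (simp add: mult_ac)
qed

lemma uu_rs_neg: assumes z: "cmod z = 1" and s: "\<sigma> \<in> {-1, 1}"
  shows "uu (rs_step \<sigma> f) (- z) = uu f z + uu f (- z) - \<sigma> * (WW f z + cnj (WW f z))"
proof -
  have z': "cmod (- z) = 1" using z by simp
  have s': "- \<sigma> \<in> {-1, 1}" using s by auto
  have p: "z ^ (2 * degree f + 1) * cnj (z ^ (2 * degree f + 1)) = 1"
  proof -
    have n1: "cmod (z ^ (2 * degree f + 1)) = 1" unfolding norm_power z by simp
    show ?thesis using complex_norm_square[of "z ^ (2 * degree f + 1)", unfolded n1] by simp
  qed
  have e: "(-1::complex) ^ degree f \<in> {-1, 1}" by (cases "even (degree f)") auto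
  have "poly (rs_step \<sigma> f) (- z) = poly f (- z) + (- \<sigma>) * (-1) ^ degree f * z ^ (2 * degree f + 1) * cnj (poly f z)"
    unfolding poly_rs[OF z'] by simp
  then show ?thesis unfolding uu_def WW_def
    using alg1[OF p s' e, of "poly f (- z)" "poly f z"] by (simp add: mult_ac)
qed



lemma orth: assumes "degree P < n" shows "Mhas (\<lambda>z. z ^ n * cnj (poly P z)) 0"
proof -
  have "Mhas (\<lambda>z. \<Sum>i\<le>degree P. cnj (coeff P i) * z powi (int n - int i)) (\<Sum>i\<le>degree P. 0)"
  proof (rule Mhas_sum)
    fix i assume "i \<in> {..degree P}"
    then have "int n - int i \<noteq> 0" using assms by auto
    then show "Mhas (\<lambda>z. cnj (coeff P i) * z powi (int n - int i)) 0"
      using Mhas_cmult[OF Mhas_powi[of "int n - int i"], of "cnj (coeff P i)"] by simp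
  qed simp
  then have h: "Mhas (\<lambda>z. \<Sum>i\<le>degree P. cnj (coeff P i) * z powi (int n - int i)) 0" by simp
  show ?thesis
  proof (rule Mhas_cong[OF h])
    fix z :: complex assume z: "cmod z = 1"
    then have nz: "z \<noteq> 0" by auto
    have "z ^ n * cnj (poly P z) = (\<Sum>i\<le>degree P. cnj (coeff P i) * (z ^ n * inverse z ^ i))"
      unfolding poly_altdef cnj_sum sum_distrib_left complex_cnj_mult complex_cnj_power cnj_unit[OF z]
      by (simp add: mult_ac)
    also have "\<dots> = (\<Sum>i\<le>degree P. cnj (coeff P i) * z powi (int n - int i))"
      using nz by (simp add: power_int_diff power_inverse divide_inverse)
    finally show "(\<Sum>i\<le>degree P. cnj (coeff P i) * z powi (int n - int i)) = z ^ n * cnj (poly P z)" by simp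
  qed
qed

lemma parity: assumes c: "continuous_on UNIV \<phi>" and odd: "\<And>z. \<phi> (- z) = - \<phi> z"
  shows "Mhas \<phi> 0"
proof -
  have h: "Mhas \<phi> (Mv \<phi>)" by (rule Mhas_cont[OF c])
  have "Mhas (\<lambda>z. \<phi> (- z)) (Mv \<phi>)" by (rule Mhas_negarg[OF h])
  then have "Mhas (\<lambda>z. - \<phi> z) (Mv \<phi>)" unfolding odd .
  moreover have "Mhas (\<lambda>z. - \<phi> z) (- Mv \<phi>)" by (rule Mhas_neg[OF h])
  ultimately have "Mv \<phi> = - Mv \<phi>" by (rule Mhas_unique)
  then have "Mv \<phi> = 0" by simp
  then show ?thesis using h by simp
qed

definition NN :: "complex poly \<Rightarrow> complex" where "NN f = Mv (uu f)"
definition AA :: "complex poly \<Rightarrow> complex" where "AA f = Mv (\<lambda>z. uu f z ^ 2)"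
definition BB :: "complex poly \<Rightarrow> complex" where "BB f = Mv (\<lambda>z. uu f z * uu f (- z))"

lemma cont_uu: "continuous_on UNIV (uu f)"
  unfolding uu_def by (intro continuous_intros)

lemma cont_WW: "continuous_on UNIV (WW f)"
  unfolding WW_def by (intro continuous_intros)

lemma hN: "Mhas (uu f) (NN f)" unfolding NN_def by (rule Mhas_cont[OF cont_uu])
lemma hA: "Mhas (\<lambda>z. uu f z ^ 2) (AA f)" unfolding AA_def
  by (rule Mhas_cont) (intro continuous_intros cont_uu[THEN continuous_on_compose2] | simp)+
lemma hB: "Mhas (\<lambda>z. uu f z * uu f (- z)) (BB f)" unfolding BB_def
  by (rule Mhas_cont) (intro continuous_intros cont_uu[THEN continuous_on_compose2] | simp)+

lemma cnj_uu: "cnj (uu f z) = uu f z" unfolding uu_def by simp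

lemma WW_neg: "WW f (- z) = - WW f z"
proof -
  have "(- z) ^ (2 * degree f + 1) = - (z ^ (2 * degree f + 1))"
    by (simp add: power_minus[of z])
  then show ?thesis unfolding WW_def by (simp add: mult_ac)
qed

lemma hW: "Mhas (WW f) 0"
proof -
  have d: "degree (f * negvar f) < 2 * degree f + 1"
    using degree_mult_le[of f "negvar f"] by (simp add: degree_negvar)
  have "Mhas (\<lambda>z. (-1) ^ degree f * (z ^ (2 * degree f + 1) * cnj (poly (f * negvar f) z))) ((-1) ^ degree f * 0)"
    by (rule Mhas_cmult[OF orth[OF d]])
  then have h: "Mhas (\<lambda>z. (-1) ^ degree f * (z ^ (2 * degree f + 1) * cnj (poly (f * negvar f) z))) 0"
    by simp
  show ?thesis
    by (rule Mhas_cong[OF h]) (simp add: WW_def poly_negvar mult_ac)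
qed

lemma hW2: "Mhas (\<lambda>z. WW f z ^ 2) 0"
proof -
  have d: "degree ((f * negvar f) ^ 2) < 2 * (2 * degree f + 1)"
    using degree_mult_le[of f "negvar f"] degree_power_le[of "f * negvar f" 2] by (simp add: degree_negvar)
  have e: "((-1::complex) ^ degree f) ^ 2 = 1" by (cases "even (degree f)") auto
  show ?thesis
  proof (rule Mhas_cong[OF orth[OF d]])
    fix z :: complex
    have "WW f z ^ 2 = ((-1::complex) ^ degree f) ^ 2 * (z ^ (2 * degree f + 1)) ^ 2 * cnj (poly f z * poly f (- z)) ^ 2"
      unfolding WW_def power_mult_distrib ..
    also have "\<dots> = z ^ (2 * (2 * degree f + 1)) * cnj (poly ((f * negvar f) ^ 2) z)"
      unfolding e by (simp only: power_mult[symmetric] poly_power poly_mult poly_negvar complex_cnj_power mult_1 mult.commute)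
    finally show "z ^ (2 * (2 * degree f + 1)) * cnj (poly ((f * negvar f) ^ 2) z) = WW f z ^ 2" by simp
  qed
qed

lemma hWc: "Mhas (\<lambda>z. cnj (WW f z)) 0" using Mhas_cnj[OF hW] by simp
lemma hW2c: "Mhas (\<lambda>z. cnj (WW f z) ^ 2) 0" using Mhas_cnj[OF hW2] by simp

lemma hWW: "Mhas (\<lambda>z. WW f z * cnj (WW f z)) (BB f)"
proof (rule Mhas_cong[OF hB])
  fix z :: complex assume z: "cmod z = 1"
  have p: "z ^ (2 * degree f + 1) * cnj (z ^ (2 * degree f + 1)) = 1"
  proof -
    have n1: "cmod (z ^ (2 * degree f + 1)) = 1" unfolding norm_power z by simp
    show ?thesis using complex_norm_square[of "z ^ (2 * degree f + 1)", unfolded n1] by simp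
  qed
  define e where "e = (-1::complex) ^ degree f"
  have ee: "e * e = 1" and ce: "cnj e = e" unfolding e_def by (cases "even (degree f)"; simp)+
  define p' where "p' = z ^ (2 * degree f + 1)"
  have p2: "p' * cnj p' = 1" using p unfolding p'_def .
  have w: "WW f z = e * p' * cnj (poly f z * poly f (- z))" unfolding WW_def e_def p'_def ..
  show "uu f z * uu f (- z) = WW f z * cnj (WW f z)"
    unfolding uu_def w complex_cnj_mult complex_cnj_cnj ce using p2 ee by algebra
qed

lemma hSW: "Mhas (\<lambda>z. (uu f z + uu f (- z)) * WW f z) 0"
proof (rule parity)
  show "continuous_on UNIV (\<lambda>z. (uu f z + uu f (- z)) * WW f z)"
    by (intro continuous_intros cont_WW cont_uu cont_uu[THEN continuous_on_compose2] | simp)+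
  fix z show "(uu f (- z) + uu f (- (- z))) * WW f (- z) = - ((uu f z + uu f (- z)) * WW f z)"
    by (simp add: WW_neg)
qed

lemma hSWc: "Mhas (\<lambda>z. (uu f z + uu f (- z)) * cnj (WW f z)) 0"
  using Mhas_cnj[OF hSW] by (simp add: cnj_uu)



lemma step: assumes s: "\<sigma> \<in> {-1, 1}"
  shows "NN (rs_step \<sigma> f) = 2 * NN f" "AA (rs_step \<sigma> f) = 2 * AA f + 4 * BB f"
    "BB (rs_step \<sigma> f) = 2 * AA f"
proof -
  have ss: "\<sigma> * \<sigma> = 1" using s by auto
  note hN2 = Mhas_negarg[OF hN[of f]]
  note hA2 = Mhas_negarg[OF hA[of f]]
  have "Mhas (\<lambda>z. uu f z + uu f (- z) + \<sigma> * (WW f z + cnj (WW f z))) (NN f + NN f + \<sigma> * (0 + 0))"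
    by (intro Mhas_add Mhas_cmult hN hN2 hW hWc)
  then have "Mhas (uu (rs_step \<sigma> f)) (NN f + NN f + \<sigma> * (0 + 0))"
    by (rule Mhas_cong) (simp add: uu_rs[OF _ s])
  then show "NN (rs_step \<sigma> f) = 2 * NN f" unfolding NN_def by (simp add: Mhas_Mv)
  have "Mhas (\<lambda>z. uu f z ^ 2 + uu f (- z) ^ 2 + 2 * (uu f z * uu f (- z))
     + (2 * \<sigma>) * ((uu f z + uu f (- z)) * WW f z) + (2 * \<sigma>) * ((uu f z + uu f (- z)) * cnj (WW f z))
     + WW f z ^ 2 + cnj (WW f z) ^ 2 + 2 * (WW f z * cnj (WW f z)))
     (AA f + AA f + 2 * BB f + (2 * \<sigma>) * 0 + (2 * \<sigma>) * 0 + 0 + 0 + 2 * BB f)"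
    by (intro Mhas_add Mhas_cmult hA hA2 hB hSW hSWc hW2 hW2c hWW)
  then have "Mhas (\<lambda>z. uu (rs_step \<sigma> f) z ^ 2) (AA f + AA f + 2 * BB f + (2 * \<sigma>) * 0 + (2 * \<sigma>) * 0 + 0 + 0 + 2 * BB f)"
  proof (rule Mhas_cong)
    fix z :: complex assume z: "cmod z = 1"
    show "uu f z ^ 2 + uu f (- z) ^ 2 + 2 * (uu f z * uu f (- z))
     + (2 * \<sigma>) * ((uu f z + uu f (- z)) * WW f z) + (2 * \<sigma>) * ((uu f z + uu f (- z)) * cnj (WW f z))
     + WW f z ^ 2 + cnj (WW f z) ^ 2 + 2 * (WW f z * cnj (WW f z)) = uu (rs_step \<sigma> f) z ^ 2"
      unfolding uu_rs[OF z s] using ss by algebra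
  qed
  then show "AA (rs_step \<sigma> f) = 2 * AA f + 4 * BB f" unfolding AA_def by (simp add: Mhas_Mv)
  have "Mhas (\<lambda>z. uu f z ^ 2 + uu f (- z) ^ 2 + 2 * (uu f z * uu f (- z))
     - WW f z ^ 2 - cnj (WW f z) ^ 2 - 2 * (WW f z * cnj (WW f z)))
     (AA f + AA f + 2 * BB f - 0 - 0 - 2 * BB f)"
    by (intro Mhas_add Mhas_diff Mhas_cmult hA hA2 hB hW2 hW2c hWW)
  then have "Mhas (\<lambda>z. uu (rs_step \<sigma> f) z * uu (rs_step \<sigma> f) (- z)) (AA f + AA f + 2 * BB f - 0 - 0 - 2 * BB f)"
  proof (rule Mhas_cong)
    fix z :: complex assume z: "cmod z = 1"
    show "uu f z ^ 2 + uu f (- z) ^ 2 + 2 * (uu f z * uu f (- z))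
     - WW f z ^ 2 - cnj (WW f z) ^ 2 - 2 * (WW f z * cnj (WW f z))
      = uu (rs_step \<sigma> f) z * uu (rs_step \<sigma> f) (- z)"
      unfolding uu_rs[OF z s] uu_rs_neg[OF z s] using ss by algebra
  qed
  then show "BB (rs_step \<sigma> f) = 2 * AA f" unfolding BB_def by (simp add: Mhas_Mv)
qed



lemma icoeff_out: "i \<notin> {0..int (degree f)} \<Longrightarrow> icoeff f i = 0"
  unfolding icoeff_def by (auto simp: coeff_eq_0)

lemma poly_isum: "poly f z = (\<Sum>i\<in>{0..int (degree f)}. icoeff f i * z powi i)"
proof -
  have I: "{0..int (degree f)} = int ` {0..degree f}" by (simp add: image_int_atLeastAtMost)
  have "(\<Sum>i\<in>{0..int (degree f)}. icoeff f i * z powi i) = (\<Sum>i\<in>{0..degree f}. icoeff f (int i) * z powi (int i))"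
    unfolding I by (subst sum.reindex) auto
  also have "\<dots> = (\<Sum>i\<le>degree f. coeff f i * z ^ i)"
    by (rule sum.cong) (auto simp: icoeff_def)
  finally show ?thesis by (simp add: poly_altdef)
qed

lemma uu_double: assumes z: "cmod z = 1"
  shows "uu f z = (\<Sum>i\<in>{0..int (degree f)}. \<Sum>j\<in>{0..int (degree f)}. icoeff f i * cnj (icoeff f j) * z powi (i - j))"
proof -
  have nz: "z \<noteq> 0" using z by auto
  have c: "cnj (z powi j) = inverse (z powi j)" for j
    by (simp add: cnj_unit[OF z] power_int_inverse)
  have p: "z powi i * inverse (z powi j) = z powi (i - j)" for i j
    using nz by (simp add: power_int_diff divide_inverse)
  show ?thesis unfolding uu_def poly_isum[of f z] cnj_sum sum_product complex_cnj_mult c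
    by (intro sum.cong refl) (simp add: p[symmetric] mult_ac)
qed

lemma inner_shift:
  assumes j: "j \<in> {0..int (degree f)}"
  shows "(\<Sum>s\<in>{- int (degree f)..int (degree f)}. icoeff f (j + s) * z powi s)
       = (\<Sum>i\<in>{0..int (degree f)}. icoeff f i * z powi (i - j))"
proof -
  let ?d = "int (degree f)"
  have "(\<Sum>s\<in>{- ?d..?d}. icoeff f (j + s) * z powi s) = (\<Sum>i\<in>plus j ` {- ?d..?d}. icoeff f i * z powi (i - j))"
    by (subst sum.reindex) (auto simp: inj_on_def)
  also have "plus j ` {- ?d..?d} = {- ?d + j..?d + j}" by simp
  also have "(\<Sum>i\<in>{- ?d + j..?d + j}. icoeff f i * z powi (i - j)) = (\<Sum>i\<in>{0..?d}. icoeff f i * z powi (i - j))"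
    by (rule sum.mono_neutral_right) (use j in \<open>auto simp: icoeff_out\<close>)
  finally show ?thesis .
qed

lemma uu_acorr: assumes z: "cmod z = 1"
  shows "uu f z = (\<Sum>s\<in>{-(int (plen f) - 1)..int (plen f) - 1}. acorr f s * z powi s)"
proof -
  let ?d = "int (degree f)"
  have L: "{-(int (plen f) - 1)..int (plen f) - 1} = {- ?d..?d}" unfolding plen_def by simp
  have L2: "{0..<int (plen f)} = {0..?d}" unfolding plen_def by auto
  have "(\<Sum>s\<in>{- ?d..?d}. acorr f s * z powi s)
      = (\<Sum>s\<in>{- ?d..?d}. \<Sum>j\<in>{0..?d}. cnj (icoeff f j) * (icoeff f (j + s) * z powi s))"
    unfolding acorr_def L2 sum_distrib_right by (simp add: mult_ac)
  also have "\<dots> = (\<Sum>j\<in>{0..?d}. cnj (icoeff f j) * (\<Sum>s\<in>{- ?d..?d}. icoeff f (j + s) * z powi s))"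
    by (subst sum.swap) (simp add: sum_distrib_left)
  also have "\<dots> = (\<Sum>j\<in>{0..?d}. cnj (icoeff f j) * (\<Sum>i\<in>{0..?d}. icoeff f i * z powi (i - j)))"
    by (intro sum.cong refl) (simp add: inner_shift)
  also have "\<dots> = (\<Sum>i\<in>{0..?d}. \<Sum>j\<in>{0..?d}. icoeff f i * cnj (icoeff f j) * z powi (i - j))"
    by (subst sum.swap) (simp add: sum_distrib_left mult_ac)
  finally show ?thesis unfolding L uu_double[OF z] by simp
qed

lemma NN_acorr: "NN f = acorr f 0"
proof -
  let ?D = "{-(int (plen f) - 1)..int (plen f) - 1}"
  have "0 \<in> ?D" unfolding plen_def by simp
  have "Mhas (\<lambda>z. \<Sum>s\<in>?D. acorr f s * z powi s) (\<Sum>s\<in>?D. acorr f s * (if s = 0 then 1 else 0))"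
    by (intro Mhas_sum Mhas_cmult Mhas_powi) simp
  then have "Mhas (uu f) (\<Sum>s\<in>?D. acorr f s * (if s = 0 then 1 else 0))"
    by (rule Mhas_cong) (simp add: uu_acorr)
  then have "NN f = (\<Sum>s\<in>?D. acorr f s * (if s = 0 then 1 else 0))" unfolding NN_def by (rule Mhas_Mv)
  also have "\<dots> = (\<Sum>s\<in>?D. if s = 0 then acorr f s else 0)" by (intro sum.cong) auto
  also have "\<dots> = acorr f 0" using \<open>0 \<in> ?D\<close> by simp
  finally show ?thesis .
qed

lemma AA_acorr: "AA f = of_real (\<Sum>s\<in>{-(int (plen f) - 1)..int (plen f) - 1}. (cmod (acorr f s))\<^sup>2)"
proof -
  let ?D = "{-(int (plen f) - 1)..int (plen f) - 1}"
  let ?C = "acorr f"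
  have "Mhas (\<lambda>z. \<Sum>s\<in>?D. \<Sum>t\<in>?D. (?C s * cnj (?C t)) * z powi (s - t))
            (\<Sum>s\<in>?D. \<Sum>t\<in>?D. (?C s * cnj (?C t)) * (if s - t = 0 then 1 else 0))"
    by (intro Mhas_sum Mhas_cmult Mhas_powi) simp_all
  then have "Mhas (\<lambda>z. uu f z ^ 2) (\<Sum>s\<in>?D. \<Sum>t\<in>?D. (?C s * cnj (?C t)) * (if s - t = 0 then 1 else 0))"
  proof (rule Mhas_cong)
    fix z :: complex assume z: "cmod z = 1"
    have nz: "z \<noteq> 0" using z by auto
    have c: "cnj (z powi j) = inverse (z powi j)" for j
      by (simp add: cnj_unit[OF z] power_int_inverse)
    have p: "z powi i * inverse (z powi j) = z powi (i - j)" for i j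
      using nz by (simp add: power_int_diff divide_inverse)
    have "uu f z ^ 2 = uu f z * cnj (uu f z)" by (simp add: cnj_uu power2_eq_square)
    also have "\<dots> = (\<Sum>s\<in>?D. \<Sum>t\<in>?D. (?C s * cnj (?C t)) * z powi (s - t))"
      unfolding uu_acorr[OF z] cnj_sum sum_product complex_cnj_mult c
      by (intro sum.cong refl) (simp add: p[symmetric] mult_ac)
    finally show "(\<Sum>s\<in>?D. \<Sum>t\<in>?D. (?C s * cnj (?C t)) * z powi (s - t)) = uu f z ^ 2" by simp
  qed
  then have "AA f = (\<Sum>s\<in>?D. \<Sum>t\<in>?D. (?C s * cnj (?C t)) * (if s - t = 0 then 1 else 0))"
    unfolding AA_def by (rule Mhas_Mv)
  also have "\<dots> = (\<Sum>s\<in>?D. ?C s * cnj (?C s))"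
  proof (intro sum.cong refl)
    fix s assume "s \<in> ?D"
    have "(\<Sum>t\<in>?D. (?C s * cnj (?C t)) * (if s - t = 0 then 1 else 0)) = (\<Sum>t\<in>?D. if s = t then ?C s * cnj (?C t) else 0)"
      by (intro sum.cong) auto
    also have "\<dots> = ?C s * cnj (?C s)" using \<open>s \<in> ?D\<close> by simp
    finally show "(\<Sum>t\<in>?D. (?C s * cnj (?C t)) * (if s - t = 0 then 1 else 0)) = ?C s * cnj (?C s)" .
  qed
  also have "\<dots> = of_real (\<Sum>s\<in>?D. (cmod (?C s))\<^sup>2)"
    unfolding of_real_sum by (intro sum.cong refl) (rule complex_norm_square[symmetric])
  finally show ?thesis .
qed

lemma ADF_AN: "ADF f = (Re (AA f) - (cmod (NN f))\<^sup>2) / (cmod (NN f))\<^sup>2"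
proof -
  let ?D = "{-(int (plen f) - 1)..int (plen f) - 1}"
  have "0 \<in> ?D" unfolding plen_def by simp
  have "(\<Sum>s\<in>?D - {0}. (cmod (acorr f s))\<^sup>2) = (\<Sum>s\<in>?D. (cmod (acorr f s))\<^sup>2) - (cmod (acorr f 0))\<^sup>2"
    using \<open>0 \<in> ?D\<close> by (simp add: sum_diff1)
  then show ?thesis unfolding ADF_def AA_acorr NN_acorr by simp
qed



lemma inv_n: "NN (gen_n f) = NN f \<and> AA (gen_n f) = AA f \<and> BB (gen_n f) = BB f"
proof -
  have "uu (gen_n f) = uu f" by (rule ext) (simp add: uu_def gen_n_def)
  then show ?thesis unfolding NN_def AA_def BB_def by simp
qed

lemma inv_h: "NN (gen_h f) = NN f \<and> AA (gen_h f) = AA f \<and> BB (gen_h f) = BB f"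
proof -
  have u: "uu (gen_h f) z = uu f (- z)" for z by (simp add: uu_def gen_h_def poly_negvar)
  have "NN (gen_h f) = NN f" unfolding NN_def u using Mhas_negarg[OF hN[of f]] by (simp add: Mhas_Mv NN_def)
  moreover have "AA (gen_h f) = AA f" unfolding AA_def u using Mhas_negarg[OF hA[of f]] by (simp add: Mhas_Mv AA_def)
  moreover have "BB (gen_h f) = BB f" unfolding BB_def u using Mhas_negarg[OF hB[of f]] by (simp add: Mhas_Mv BB_def)
  ultimately show ?thesis by simp
qed

lemma uu_dagger: assumes z: "cmod z = 1" shows "uu (dagger f) z = uu f z"
proof -
  have p: "z ^ degree f * cnj (z ^ degree f) = 1"
  proof -
    have n1: "cmod (z ^ degree f) = 1" unfolding norm_power z by simp
    show ?thesis using complex_norm_square[of "z ^ degree f", unfolded n1] by simp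
  qed
  define q where "q = z ^ degree f"
  have p': "q * cnj q = 1" using p unfolding q_def .
  show ?thesis unfolding uu_def poly_dagger[OF z] complex_cnj_mult complex_cnj_cnj q_def[symmetric]
    using p' by algebra
qed

lemma inv_r: "NN (gen_r f) = NN f \<and> AA (gen_r f) = AA f \<and> BB (gen_r f) = BB f"
proof -
  have "Mhas (uu (gen_r f)) (NN f)"
    by (rule Mhas_cong[OF hN]) (simp add: gen_r_def uu_dagger)
  moreover have "Mhas (\<lambda>z. uu (gen_r f) z ^ 2) (AA f)"
    by (rule Mhas_cong[OF hA]) (simp add: gen_r_def uu_dagger)
  moreover have "Mhas (\<lambda>z. uu (gen_r f) z * uu (gen_r f) (- z)) (BB f)"
    by (rule Mhas_cong[OF hB]) (simp add: gen_r_def uu_dagger)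
  ultimately show ?thesis unfolding NN_def AA_def BB_def by (simp add: Mhas_Mv)
qed

lemma inv_G: "t \<in> Ggroup \<Longrightarrow> NN (t f) = NN f \<and> AA (t f) = AA f \<and> BB (t f) = BB f"
proof (induction rule: Ggroup.induct)
  case G_id then show ?case by simp
next
  case (G_n t) then show ?case using inv_n[of "t f"] by simp
next
  case (G_h t) then show ?case using inv_h[of "t f"] by simp
next
  case (G_r t) then show ?case using inv_r[of "t f"] by simp
qed

lemma rs_seq: assumes "is_RS_like_seq F"
  shows "NN (F (Suc m)) = 2 * NN (F m) \<and> AA (F (Suc m)) = 2 * AA (F m) + 4 * BB (F m) \<and> BB (F (Suc m)) = 2 * AA (F m)"
proof -
  obtain \<sigma> where s: "\<And>m. \<sigma> m \<in> {-1, 1}" and F: "\<And>m. F (Suc m) = rs_step (\<sigma> m) (F m)"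
    using assms unfolding is_RS_like_seq_def by blast
  show ?thesis unfolding F using step[OF s] by simp
qed

lemma conv: assumes R: "is_RS_like_seq F" and n0: "NN (F 0) \<noteq> 0"
  shows "(\<lambda>m. ADF (F m)) \<longlonglongrightarrow> (2 * Re (AA (F 0) + BB (F 0)) / 3) / (cmod (NN (F 0)))\<^sup>2 - 1"
proof -
  define n where "n = cmod (NN (F 0))"
  have npos: "n > 0" unfolding n_def using n0 by simp
  have nm: "cmod (NN (F m)) = 2 ^ m * n" for m
    by (induction m) (auto simp: n_def rs_seq[OF R] norm_mult)
  define x where "x m = Re (AA (F m)) / 4 ^ m" for m
  define y where "y m = Re (BB (F m)) / 4 ^ m" for m
  have rx: "x (Suc m) = x m / 2 + y m" for m
    unfolding x_def y_def by (simp add: rs_seq[OF R] field_simps)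
  have ry: "y (Suc m) = x m / 2" for m
    unfolding x_def y_def by (simp add: rs_seq[OF R] field_simps)
  define I where "I = x 0 + y 0"
  define D where "D = x 0 - 2 * y 0"
  have closed: "x m = (2 * I + D * (-1/2) ^ m) / 3 \<and> y m = (I - D * (-1/2) ^ m) / 3" for m
  proof (induction m)
    case 0 then show ?case unfolding I_def D_def by simp
  next
    case (Suc m) then show ?case unfolding rx ry by (simp add: field_simps)
  qed
  have adf: "ADF (F m) = ((2 * I + D * (-1/2) ^ m) / 3) / n\<^sup>2 - 1" for m
  proof -
    have "ADF (F m) = (Re (AA (F m)) - (2 ^ m * n)\<^sup>2) / (2 ^ m * n)\<^sup>2" unfolding ADF_AN nm ..
    also have "(2 ^ m * n)\<^sup>2 = 4 ^ m * n\<^sup>2"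
    proof -
      have "(2::real) ^ m * 2 ^ m = 4 ^ m" by (simp add: power_mult_distrib[symmetric])
      then show ?thesis by (simp add: power2_eq_square mult_ac)
    qed
    also have "(Re (AA (F m)) - 4 ^ m * n\<^sup>2) / (4 ^ m * n\<^sup>2) = x m / n\<^sup>2 - 1"
      unfolding x_def using npos by (simp add: field_simps)
    finally show ?thesis using closed[of m] by simp
  qed
  have "(\<lambda>m. ((2 * I + D * (-1/2) ^ m) / 3) / n\<^sup>2 - 1) \<longlonglongrightarrow> ((2 * I + D * 0) / 3) / n\<^sup>2 - 1"
    using npos by (intro tendsto_intros) auto
  moreover have "((2 * I + D * 0) / 3) / n\<^sup>2 - 1 = (2 * Re (AA (F 0) + BB (F 0)) / 3) / (cmod (NN (F 0)))\<^sup>2 - 1"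
    unfolding I_def x_def y_def n_def by simp
  ultimately show ?thesis unfolding adf by simp
qed

lemma NN_nz: assumes "coeff f 0 \<noteq> 0" shows "NN f \<noteq> 0"
proof -
  let ?J = "{0..<int (plen f)}"
  have "NN f = (\<Sum>j\<in>?J. icoeff f j * cnj (icoeff f j))" unfolding NN_acorr acorr_def by simp
  also have "\<dots> = of_real (\<Sum>j\<in>?J. (cmod (icoeff f j))\<^sup>2)"
    unfolding of_real_sum by (intro sum.cong refl) (rule complex_norm_square[symmetric])
  finally have e: "NN f = of_real (\<Sum>j\<in>?J. (cmod (icoeff f j))\<^sup>2)" .
  have "0 \<in> ?J" unfolding plen_def by simp
  have pos: "0 < (\<Sum>j\<in>?J. (cmod (icoeff f j))\<^sup>2)"
    by (rule sum_pos2[OF _ \<open>0 \<in> ?J\<close>]) (use assms in \<open>auto simp: icoeff_def\<close>)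
  show ?thesis unfolding e of_real_eq_0_iff using pos by linarith
qed

theorem corollary3p3:
  fixes l :: nat and f a :: "nat \<Rightarrow> complex poly" and t :: "complex poly \<Rightarrow> complex poly"
  assumes "f 0 \<in> Pset l"
    and "t \<in> Ggroup"
    and "a 0 = t (f 0)"
    and "is_RS_like_seq f"
    and "is_RS_like_seq a"
  shows "\<exists>L. (\<lambda>m. ADF (f m)) \<longlonglongrightarrow> L \<and> (\<lambda>m. ADF (a m)) \<longlonglongrightarrow> L"
proof -
  have nz: "NN (f 0) \<noteq> 0" using assms(1) NN_nz unfolding Pset_def by auto
  have inv: "NN (a 0) = NN (f 0) \<and> AA (a 0) = AA (f 0) \<and> BB (a 0) = BB (f 0)"
    unfolding assms(3) by (rule inv_G[OF assms(2)])
  have "(\<lambda>m. ADF (f m)) \<longlonglongrightarrow> (2 * Re (AA (f 0) + BB (f 0)) / 3) / (cmod (NN (f 0)))\<^sup>2 - 1"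
    by (rule conv[OF assms(4) nz])
  moreover have "(\<lambda>m. ADF (a m)) \<longlonglongrightarrow> (2 * Re (AA (f 0) + BB (f 0)) / 3) / (cmod (NN (f 0)))\<^sup>2 - 1"
    using conv[OF assms(5)] inv nz by simp
  ultimately show ?thesis by blast
qed

end
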